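(* Consider a uniform planar array with $M_x$ antennas along the $x$-axis (spacing $d_x$) and $M_y$ along the $y$-axis (spacing $d_y$), wavelength $\lambda$, and for $\boldsymbol\theta=(\theta_x,\theta_y)$ let $\mathbf{a}(\boldsymbol\theta)\in\mathbb{C}^{M_xM_y}$ have entries $e^{j\frac{2\pi}{\lambda}(d_x m_x\sin\theta_x+d_y m_y\sin\theta_y)}$, $0\le m_x\le M_x-1$, $0\le m_y\le M_y-1$. Let $\boldsymbol\theta_1=(\theta_{x,1},\theta_{y,1})$ and $\boldsymbol\theta_2=(\theta_{x,2},\theta_{y,2})$ be random with $\sin\theta_{x,1}-\sin\theta_{x,2}\sim U[-\alpha_x,\alpha_x]$ and $\sin\theta_{y,1}-\sin\theta_{y,2}\sim U[-\alpha_y,\alpha_y]$ independent of $\sin\theta_{x,1}-\sin\theta_{x,2}$, where $\alpha_x,\alpha_y\in[0,1]$. Then $$\mathbb{E}\left[\mathbf{a}^H(\boldsymbol\theta_1)\mathbf{a}(\boldsymbol\theta_2)\right]=\mu\!\left(\frac{\alpha_xd_x}{\lambda},M_x\right)\mu\!\left(\frac{\alpha_yd_y}{\lambda},M_y\right),$$ $$\operatorname{Var}\left[\mathbf{a}^H(\boldsymbol\theta_1)\mathbf{a}(\boldsymbol\theta_2)\right]=\eta\!\left(\frac{\alpha_xd_x}{\lambda},M_x\right)\eta\!\left(\frac{\alpha_yd_y}{\lambda},M_y\right)-\left[\mu\!\left(\frac{\alpha_xd_x}{\lambda},M_x\right)\mu\!\left(\frac{\alpha_yd_y}{\lambda},M_y\right)\right]^2,$$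 where $\mu(c,N)=\sum_{m=0}^{N-1}\operatorname{sinc}(2\pi mc)$ and $\eta(c,N)=\sum_{m_1=0}^{N-1}\sum_{m_2=0}^{N-1}\operatorname{sinc}(2\pi c(m_1-m_2))$.
   Context: $\operatorname{sinc}(x)=\sin(x)/x$ for $x\neq0$, $\operatorname{sinc}(0)=1$. For a complex random variable $Z$, $\operatorname{Var}[Z]=\mathbb{E}|Z|^2-|\mathbb{E}Z|^2$. A uniform distribution on $[-0,0]$ means the difference is $0$ almost surely. *)

theory Defs
  imports "HOL-Probability.Probability"
begin

text \<open>sinc (library abbreviation from Sinc_Integral):
  sinc x = (if x = 0 then 1 else sin x / x).\<close>

text \<open>Uniform distribution on [-a,a] (as a measure on the reals); for a = 0 it is
  the point mass at 0, following the stated convention.\<close>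
definition unif_sym :: "real \<Rightarrow> real measure" where
  "unif_sym a = (if a = 0 then return borel 0 else uniform_measure lborel {-a..a})"

definition steer :: "real \<Rightarrow> real \<Rightarrow> real \<Rightarrow> real \<Rightarrow> real \<Rightarrow> nat \<times> nat \<Rightarrow> complex" where
  "steer dx dy lam thx thy = (\<lambda>(mx, my).
     cis (2 * pi / lam * (dx * real mx * sin thx + dy * real my * sin thy)))"

definition herm_inner :: "nat \<Rightarrow> nat \<Rightarrow> (nat \<times> nat \<Rightarrow> complex) \<Rightarrow> (nat \<times> nat \<Rightarrow> complex) \<Rightarrow> complex" where
  "herm_inner Mx My a b = (\<Sum>i \<in> {..<Mx} \<times> {..<My}. cnj (a i) * b i)"

definition mu_fn :: "real \<Rightarrow> nat \<Rightarrow> real" where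
  "mu_fn c N = (\<Sum>m<N. sinc (2 * pi * real m * c))"

definition eta_fn :: "real \<Rightarrow> nat \<Rightarrow> real" where
  "eta_fn c N = (\<Sum>m1<N. \<Sum>m2<N. sinc (2 * pi * c * (real m1 - real m2)))"

end

theory Submission imports Defs begin

lemma int_cis_Icc:
  fixes a c :: real assumes "a > 0"
  shows "(LBINT x=-a..a. cis (c*x)) = complex_of_real (2*a * sinc (c*a))"
proof (cases "c = 0")
  case True
  have "(LBINT x=-a..a. cis (c*x)) = complex_of_real a - complex_of_real (-a)"
  proof (rule interval_integral_FTC_finite)
    show "continuous_on {min (- a) a..max (- a) a} (\<lambda>x. cis (c * x))"
      by (intro continuous_intros)
    fix x
    show "(complex_of_real has_vector_derivative cis (c * x)) (at x within {min (- a) a..max (- a) a})"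
      unfolding has_vector_derivative_complex_iff using True
      by (auto intro!: derivative_eq_intros)
  qed
  then show ?thesis using True by simp
next
  case False
  define F where "F x = Complex (sin (c*x) / c) (- cos (c*x) / c)" for x
  have "(LBINT x=-a..a. cis (c*x)) = F a - F (-a)"
  proof (rule interval_integral_FTC_finite)
    show "continuous_on {min (- a) a..max (- a) a} (\<lambda>x. cis (c * x))"
      by (intro continuous_intros)
    fix x
    show "(F has_vector_derivative cis (c * x)) (at x within {min (- a) a..max (- a) a})"
      unfolding has_vector_derivative_complex_iff F_def using False
      by (auto intro!: derivative_eq_intros simp: field_simps)
  qed
  also have "\<dots> = complex_of_real (2*a * sinc (c*a))"
    using False assms by (simp add: F_def complex_eq_iff field_simps)
  finally show ?thesis .
qed

lemma cis_measurable[measurable]: "cis \<in> borel_measurable borel"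
  by (rule borel_measurable_continuous_onI) (intro continuous_intros)

lemma char_unif:
  fixes a c :: real assumes "a \<ge> 0"
  shows "(\<integral>x. cis (c*x) \<partial>unif_sym a) = complex_of_real (sinc (c*a))"
proof (cases "a = 0")
  case True
  then show ?thesis by (simp add: unif_sym_def, subst integral_return) auto
next
  case False
  with assms have a: "a > 0" by simp
  have eq: "uniform_measure lborel {-a..a} = density lborel (\<lambda>x. ennreal (indicator {-a..a} x / (2*a)))"
    unfolding uniform_measure_def using a
    by (intro arg_cong[where f="density lborel"] ext)
       (auto simp: indicator_def divide_ennreal ennreal_1[symmetric] simp del: ennreal_1)
  have "(\<integral>x. cis (c*x) \<partial>unif_sym a) = (\<integral>x. (indicator {-a..a} x / (2*a)) *\<^sub>R cis (c*x) \<partial>lborel)"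
    unfolding unif_sym_def eq using False a
    by (simp only: if_False) (subst integral_density, auto)
  also have "\<dots> = (\<integral>x. (1/(2*a)) *\<^sub>R (indicator {-a..a} x *\<^sub>R cis (c*x)) \<partial>lborel)"
    by (intro Bochner_Integration.integral_cong) auto
  also have "\<dots> = (1/(2*a)) *\<^sub>R (LBINT x:{-a..a}. cis (c*x))"
    unfolding set_lebesgue_integral_def by (rule integral_scaleR_right)
  also have "\<dots> = (1/(2*a)) *\<^sub>R (LBINT x=-a..a. cis (c*x))"
    using a by (subst interval_integral_Icc) auto
  also have "\<dots> = complex_of_real (sinc (c*a))"
    using a by (simp add: int_cis_Icc scaleR_conv_of_real)
  finally show ?thesis .
qed

lemma sinc_minus: "sinc (- x) = sinc x"
  by simp

lemma sum_sq_prod: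
  fixes f g :: "nat \<Rightarrow> nat \<Rightarrow> real"
  shows "(\<Sum>i\<in>A \<times> B. \<Sum>j\<in>A \<times> B. f (fst i) (fst j) * g (snd i) (snd j))
       = (\<Sum>a1\<in>A. \<Sum>a2\<in>A. f a1 a2) * (\<Sum>b1\<in>B. \<Sum>b2\<in>B. g b1 b2)"
proof -
  have inner: "(\<Sum>j\<in>A \<times> B. F j) = (\<Sum>a\<in>A. \<Sum>b\<in>B. F (a, b))" for F :: "nat \<times> nat \<Rightarrow> real"
    by (simp add: sum.cartesian_product)
  have "(\<Sum>i\<in>A \<times> B. \<Sum>j\<in>A \<times> B. f (fst i) (fst j) * g (snd i) (snd j))
      = (\<Sum>a1\<in>A. \<Sum>b1\<in>B. \<Sum>a2\<in>A. \<Sum>b2\<in>B. f a1 a2 * g b1 b2)"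
    by (simp add: inner)
  also have "\<dots> = (\<Sum>a1\<in>A. \<Sum>a2\<in>A. \<Sum>b1\<in>B. \<Sum>b2\<in>B. f a1 a2 * g b1 b2)"
    by (rule sum.cong[OF refl], rule sum.swap)
  also have "\<dots> = (\<Sum>a1\<in>A. \<Sum>a2\<in>A. f a1 a2) * (\<Sum>b1\<in>B. \<Sum>b2\<in>B. g b1 b2)"
    by (simp only: sum_distrib_right) (simp only: sum_distrib_left)
  finally show ?thesis .
qed

theorem lemma1:
  fixes M :: "'a measure"
    and thx1 thy1 thx2 thy2 :: "'a \<Rightarrow> real"
    and Mx My :: nat and dx dy lam ax ay :: real
  assumes "prob_space M"
    and "thx1 \<in> borel_measurable M" "thy1 \<in> borel_measurable M"
    and "thx2 \<in> borel_measurable M" "thy2 \<in> borel_measurable M"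
    and "dx > 0" "dy > 0" "lam > 0"
    and "0 \<le> ax" "ax \<le> 1" "0 \<le> ay" "ay \<le> 1"
    and "distr M borel (\<lambda>\<omega>. sin (thx1 \<omega>) - sin (thx2 \<omega>)) = unif_sym ax"
    and "distr M borel (\<lambda>\<omega>. sin (thy1 \<omega>) - sin (thy2 \<omega>)) = unif_sym ay"
    and "prob_space.indep_var M borel (\<lambda>\<omega>. sin (thx1 \<omega>) - sin (thx2 \<omega>))
                                borel (\<lambda>\<omega>. sin (thy1 \<omega>) - sin (thy2 \<omega>))"
  shows "(let Z = (\<lambda>\<omega>. herm_inner Mx My (steer dx dy lam (thx1 \<omega>) (thy1 \<omega>))
                                        (steer dx dy lam (thx2 \<omega>) (thy2 \<omega>)))
          in integral\<^sup>L M Z = complex_of_real (mu_fn (ax * dx / lam) Mx * mu_fn (ay * dy / lam) My)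
           \<and> (integral\<^sup>L M (\<lambda>\<omega>. (cmod (Z \<omega>))\<^sup>2) - (cmod (integral\<^sup>L M Z))\<^sup>2
               = eta_fn (ax * dx / lam) Mx * eta_fn (ay * dy / lam) My
                 - (mu_fn (ax * dx / lam) Mx * mu_fn (ay * dy / lam) My)\<^sup>2))"
proof -
  interpret prob_space M by (rule assms(1))
  define X where "X \<omega> = sin (thx1 \<omega>) - sin (thx2 \<omega>)" for \<omega>
  define Y where "Y \<omega> = sin (thy1 \<omega>) - sin (thy2 \<omega>)" for \<omega>
  define P where "P m = - (2 * pi / lam * dx * real m)" for m :: nat
  define Q where "Q m = - (2 * pi / lam * dy * real m)" for m :: nat
  define I where "I = {..<Mx} \<times> {..<My}"
  have [measurable]: "X \<in> borel_measurable M" "Y \<in> borel_measurable M"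
    unfolding X_def Y_def using assms(2-5) by measurable
  have dX: "distr M borel X = unif_sym ax" and dY: "distr M borel Y = unif_sym ay"
    using assms(13,14) unfolding X_def Y_def by simp_all
  have ind: "indep_var borel X borel Y"
    using assms(15) unfolding X_def Y_def by simp
  have bnd: "integrable M f" if "f \<in> borel_measurable M" "\<And>\<omega>. norm (f \<omega>) \<le> 1" for f :: "'a \<Rightarrow> complex"
    using that by (intro integrable_const_bound[where B=1]) auto
  have E1: "(\<integral>\<omega>. cis (p * X \<omega>) \<partial>M) = complex_of_real (sinc (p * ax))" for p
  proof -
    have "(\<integral>\<omega>. cis (p * X \<omega>) \<partial>M) = (\<integral>x. cis (p * x) \<partial>distr M borel X)"
      by (subst integral_distr) auto
    then show ?thesis using dX char_unif[OF assms(9)] by simp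
  qed
  have E2: "(\<integral>\<omega>. cis (q * Y \<omega>) \<partial>M) = complex_of_real (sinc (q * ay))" for q
  proof -
    have "(\<integral>\<omega>. cis (q * Y \<omega>) \<partial>M) = (\<integral>x. cis (q * x) \<partial>distr M borel Y)"
      by (subst integral_distr) auto
    then show ?thesis using dY char_unif[OF assms(11)] by simp
  qed
  have indc: "indep_var borel (\<lambda>\<omega>. cis (p * X \<omega>)) borel (\<lambda>\<omega>. cis (q * Y \<omega>))" for p q
    using indep_var_compose[OF ind, of "\<lambda>x. cis (p * x)" borel "\<lambda>x. cis (q * x)" borel]
    by (simp add: comp_def)
  have E: "(\<integral>\<omega>. cis (p * X \<omega>) * cis (q * Y \<omega>) \<partial>M) = complex_of_real (sinc (p * ax) * sinc (q * ay))" for p q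
    using indep_var_lebesgue_integral[OF indc bnd bnd] E1 E2 by simp
  have IE: "integrable M (\<lambda>\<omega>. cis (p * X \<omega>) * cis (q * Y \<omega>))" for p q
    by (rule bnd) (auto simp: norm_mult)
  define Z where "Z \<omega> = herm_inner Mx My (steer dx dy lam (thx1 \<omega>) (thy1 \<omega>))
                                        (steer dx dy lam (thx2 \<omega>) (thy2 \<omega>))" for \<omega>
  have Zeq: "Z \<omega> = (\<Sum>i\<in>I. cis (P (fst i) * X \<omega>) * cis (Q (snd i) * Y \<omega>))" for \<omega>
    unfolding Z_def herm_inner_def I_def steer_def using assms(8)
    by (intro sum.cong refl) (clarsimp simp: cis_cnj cis_mult, rule arg_cong[where f=cis], simp add: P_def Q_def X_def Y_def field_simps)
  have EZ: "integral\<^sup>L M Z = complex_of_real (mu_fn (ax * dx / lam) Mx * mu_fn (ay * dy / lam) My)"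
  proof -
    have "integral\<^sup>L M Z = (\<Sum>i\<in>I. complex_of_real (sinc (P (fst i) * ax) * sinc (Q (snd i) * ay)))"
      unfolding Zeq by (subst Bochner_Integration.integral_sum) (auto simp: IE E)
    also have "\<dots> = complex_of_real (\<Sum>i\<in>I. sinc (P (fst i) * ax) * sinc (Q (snd i) * ay))"
      by simp
    also have "(\<Sum>i\<in>I. sinc (P (fst i) * ax) * sinc (Q (snd i) * ay))
        = (\<Sum>m<Mx. sinc (P m * ax)) * (\<Sum>m<My. sinc (Q m * ay))"
      unfolding I_def by (simp add: sum_product sum.cartesian_product case_prod_beta)
    also have "(\<Sum>m<Mx. sinc (P m * ax)) = mu_fn (ax * dx / lam) Mx"
      unfolding mu_fn_def
    proof (intro sum.cong refl)
      fix m have "P m * ax = - (2 * pi * real m * (ax * dx / lam))" using assms(8) by (simp add: P_def field_simps)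
      then show "sinc (P m * ax) = sinc (2 * pi * real m * (ax * dx / lam))" by (simp only: sinc_minus)
    qed
    also have "(\<Sum>m<My. sinc (Q m * ay)) = mu_fn (ay * dy / lam) My"
      unfolding mu_fn_def
    proof (intro sum.cong refl)
      fix m have "Q m * ay = - (2 * pi * real m * (ay * dy / lam))" using assms(8) by (simp add: Q_def field_simps)
      then show "sinc (Q m * ay) = sinc (2 * pi * real m * (ay * dy / lam))" by (simp only: sinc_minus)
    qed
    finally show ?thesis .
  qed
  have EZ2: "integral\<^sup>L M (\<lambda>\<omega>. (cmod (Z \<omega>))\<^sup>2) = eta_fn (ax * dx / lam) Mx * eta_fn (ay * dy / lam) My"
  proof -
    have sq: "complex_of_real ((cmod (Z \<omega>))\<^sup>2) = (\<Sum>i\<in>I. \<Sum>j\<in>I. cis ((P (fst i) - P (fst j)) * X \<omega>) * cis ((Q (snd i) - Q (snd j)) * Y \<omega>))" for \<omega>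
    proof -
      have "complex_of_real ((cmod (Z \<omega>))\<^sup>2) = Z \<omega> * cnj (Z \<omega>)"
        by (rule complex_norm_square)
      also have "\<dots> = (\<Sum>i\<in>I. \<Sum>j\<in>I. (cis (P (fst i) * X \<omega>) * cis (Q (snd i) * Y \<omega>)) * cnj (cis (P (fst j) * X \<omega>) * cis (Q (snd j) * Y \<omega>)))"
        unfolding Zeq by (simp add: sum_product cnj_sum)
      also have "\<dots> = (\<Sum>i\<in>I. \<Sum>j\<in>I. cis ((P (fst i) - P (fst j)) * X \<omega>) * cis ((Q (snd i) - Q (snd j)) * Y \<omega>))"
        by (intro sum.cong refl) (simp add: cis_cnj cis_mult algebra_simps)
      finally show ?thesis .
    qed
    have "complex_of_real (integral\<^sup>L M (\<lambda>\<omega>. (cmod (Z \<omega>))\<^sup>2)) = integral\<^sup>L M (\<lambda>\<omega>. complex_of_real ((cmod (Z \<omega>))\<^sup>2))"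
      by (rule integral_complex_of_real[symmetric])
    also have "\<dots> = (\<Sum>i\<in>I. \<Sum>j\<in>I. complex_of_real (sinc ((P (fst i) - P (fst j)) * ax) * sinc ((Q (snd i) - Q (snd j)) * ay)))"
      unfolding sq by (subst Bochner_Integration.integral_sum, simp add: IE, intro sum.cong refl, subst Bochner_Integration.integral_sum) (auto simp: IE E)
    also have "\<dots> = complex_of_real (\<Sum>i\<in>I. \<Sum>j\<in>I. sinc ((P (fst i) - P (fst j)) * ax) * sinc ((Q (snd i) - Q (snd j)) * ay))"
      by simp
    also have "(\<Sum>i\<in>I. \<Sum>j\<in>I. sinc ((P (fst i) - P (fst j)) * ax) * sinc ((Q (snd i) - Q (snd j)) * ay))
       = (\<Sum>a1<Mx. \<Sum>a2<Mx. sinc ((P a1 - P a2) * ax)) * (\<Sum>b1<My. \<Sum>b2<My. sinc ((Q b1 - Q b2) * ay))"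
      unfolding I_def by (rule sum_sq_prod)
    also have "(\<Sum>a1<Mx. \<Sum>a2<Mx. sinc ((P a1 - P a2) * ax)) = eta_fn (ax * dx / lam) Mx"
      unfolding eta_fn_def
    proof (intro sum.cong refl)
      fix m1 m2 have "(P m1 - P m2) * ax = - (2 * pi * (ax * dx / lam) * (real m1 - real m2))" using assms(8) by (simp add: P_def field_simps)
      then show "sinc ((P m1 - P m2) * ax) = sinc (2 * pi * (ax * dx / lam) * (real m1 - real m2))" by (simp only: sinc_minus)
    qed
    also have "(\<Sum>b1<My. \<Sum>b2<My. sinc ((Q b1 - Q b2) * ay)) = eta_fn (ay * dy / lam) My"
      unfolding eta_fn_def
    proof (intro sum.cong refl)
      fix m1 m2 have "(Q m1 - Q m2) * ay = - (2 * pi * (ay * dy / lam) * (real m1 - real m2))" using assms(8) by (simp add: Q_def field_simps)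
      then show "sinc ((Q m1 - Q m2) * ay) = sinc (2 * pi * (ay * dy / lam) * (real m1 - real m2))" by (simp only: sinc_minus)
    qed
    finally show ?thesis by (simp only: of_real_eq_iff)
  qed
  show ?thesis
    unfolding Let_def Z_def[symmetric] unfolding EZ EZ2 norm_of_real power2_abs
    by simp
qed

end
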